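(* Let $n\ge2$, let $\lambda_1\ge\dots\ge\lambda_n$ be real, and let $\mu_1\ge\dots\ge\mu_{n-1}$ be the critical points (with multiplicity) of $q(x)=\prod_{j=1}^n(x-\lambda_j)$. Let $N=n(n-1)$ and define $\lambda^*,\mu^*,\nu^*\in\mathbb R^N$ by: $\lambda^*$ consists of each $\lambda_j$ ($j=1,\dots,n$) repeated $n-1$ times; $\mu^*$ consists of each $\mu_k$ ($k=1,\dots,n-1$) repeated $n$ times; $\nu^*$ consists of each $\nu_j:=\frac{n-1}{n}\lambda_{j+1}+\frac1n\lambda_1$ ($j=1,\dots,n-1$) repeated $n$ times. Then $\nu^*\prec\mu^*\prec\lambda^*$. Moreover there exists a doubly stochastic $N\times N$ matrix $D$ with $\mu^*=D\lambda^*$.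
   Context: For $x\in\mathbb R^N$, $x^{\downarrow}$ denotes the rearrangement of $x$ in non-increasing order. For $x,y\in\mathbb R^N$, $x\succ y$ (equivalently $y\prec x$), "$x$ majorizes $y$", means $\sum_{i=1}^k x^{\downarrow}_i\ge\sum_{i=1}^k y^{\downarrow}_i$ for all $k=1,\dots,N$, with equality for $k=N$. A real square matrix is doubly stochastic if its entries are non-negative and all row and column sums equal $1$. *)

theory Defs
  imports Complex_Main "HOL-Computational_Algebra.Polynomial"
begin

definition decr :: "real list \<Rightarrow> real list" where
  "decr x = rev (sort x)"

text \<open>majorizes x y : x majorizes y (written y \<prec> x).\<close>
definition majorizes :: "real list \<Rightarrow> real list \<Rightarrow> bool" where
  "majorizes x y \<longleftrightarrow> length x = length y \<and>
     (\<forall>k\<in>{1..length x}. sum_list (take k (decr y)) \<le> sum_list (take k (decr x))) \<and>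
     sum_list (take (length x) (decr x)) = sum_list (take (length x) (decr y))"

definition doubly_stochastic :: "nat \<Rightarrow> (nat \<Rightarrow> nat \<Rightarrow> real) \<Rightarrow> bool" where
  "doubly_stochastic N D \<longleftrightarrow>
     (\<forall>i<N. \<forall>j<N. D i j \<ge> 0) \<and>
     (\<forall>i<N. (\<Sum>j<N. D i j) = 1) \<and>
     (\<forall>j<N. (\<Sum>i<N. D i j) = 1)"

end

theory Submission
  imports Defs "HOL-Library.Multiset"
begin


lemma lin_prod_deg:
  fixes a :: "'b \<Rightarrow> real"
  assumes "finite A"
  shows "degree (\<Prod>l\<in>A. [:-a l,1:]) = card A \<and> coeff (\<Prod>l\<in>A. [:-a l,1:]) (card A) = 1"
  using assms
proof (induction A rule: finite_induct)
  case empty then show ?case by simp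
next
  case (insert x F)
  let ?P = "\<Prod>l\<in>F. [:-a l,1:]"
  have P0: "?P \<noteq> 0" using insert by (metis coeff_0 zero_neq_one)
  have "(\<Prod>l\<in>insert x F. [:-a l,1:]) = [:-a x,1:] * ?P" using insert by simp
  moreover have "degree ([:-a x,1:] * ?P) = Suc (card F)"
    using P0 insert by (subst degree_mult_eq) auto
  moreover have "coeff ([:-a x,1:] * ?P) (Suc (card F)) = 1"
    using coeff_mult_degree_sum[of "[:-a x,1:]" ?P] insert by simp
  ultimately show ?case using insert by simp
qed

lemma lin_prod_nz:
  fixes a :: "'b \<Rightarrow> real"
  assumes "finite A"
  shows "(\<Prod>l\<in>A. [:-a l,1:]) \<noteq> 0"
  using lin_prod_deg[OF assms, of a] by (metis coeff_0 zero_neq_one)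

lemma zero_lemma:
  fixes p :: "real poly"
  assumes "degree p < t" "inj_on s {..<t}" "\<forall>i<t. poly p (s i) = 0"
  shows "p = 0"
proof (rule ccontr)
  assume "p \<noteq> 0"
  then have "card {x. poly p x = 0} \<le> degree p" by (rule card_poly_roots_bound)
  moreover have "s ` {..<t} \<subseteq> {x. poly p x = 0}" using assms(3) by auto
  moreover have "finite {x. poly p x = 0}" using \<open>p \<noteq> 0\<close> poly_roots_finite by blast
  ultimately have "card (s ` {..<t}) \<le> degree p" by (meson card_mono le_trans)
  then show False using assms(1,2) by (simp add: card_image)
qed

lemma pderiv_lin: "pderiv [:-c, 1:] = (1::real poly)"
  by (simp add: pderiv_pCons)

lemma pderiv_prod_poly:
  fixes a :: "'b \<Rightarrow> real"
  shows "poly (pderiv (\<Prod>l\<in>A. [:-a l,1:])) x = (\<Sum>j\<in>A. \<Prod>l\<in>A-{j}. (x - a l))"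
  by (simp add: pderiv_prod pderiv_lin poly_sum poly_prod)

lemma pderiv_prod_eval:
  fixes a :: "'b \<Rightarrow> real"
  assumes "finite A" "i \<in> A"
  shows "poly (pderiv (\<Prod>l\<in>A. [:-a l,1:])) (a i) = (\<Prod>l\<in>A-{i}. (a i - a l))"
proof -
  have "(\<Sum>j\<in>A. \<Prod>l\<in>A-{j}. (a i - a l)) = (\<Prod>l\<in>A-{i}. (a i - a l)) + (\<Sum>j\<in>A-{i}. \<Prod>l\<in>A-{j}. (a i - a l))"
    using assms by (simp add: sum.remove)
  moreover have "(\<Sum>j\<in>A-{i}. \<Prod>l\<in>A-{j}. (a i - a l)) = 0"
  proof (rule sum.neutral, intro ballI)
    fix j assume "j \<in> A - {i}"
    then have "i \<in> A - {j}" using assms by auto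
    then show "(\<Prod>l\<in>A-{j}. (a i - a l)) = 0" using assms
      by (intro prod_zero) auto
  qed
  ultimately show ?thesis by (simp add: pderiv_prod_poly)
qed

lemma log_deriv:
  fixes a :: "nat \<Rightarrow> real"
  assumes "\<forall>j<n. x \<noteq> a j"
  shows "poly (pderiv (\<Prod>j<n. [:-a j,1:])) x = poly (\<Prod>j<n. [:-a j,1:]) x * (\<Sum>j<n. 1/(x - a j)) \<and>
         poly (pderiv (pderiv (\<Prod>j<n. [:-a j,1:]))) x = poly (\<Prod>j<n. [:-a j,1:]) x *
            ((\<Sum>j<n. 1/(x - a j))^2 - (\<Sum>j<n. 1/(x - a j)^2))"
  using assms
proof (induction n)
  case 0 then show ?case by simp
next
  case (Suc n)
  let ?Q = "\<Prod>j<n. [:-a j,1:]"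
  let ?F = "\<Sum>j<n. 1/(x - a j)"
  let ?G = "\<Sum>j<n. 1/(x - a j)^2"
  have IH: "poly (pderiv ?Q) x = poly ?Q x * ?F" "poly (pderiv (pderiv ?Q)) x = poly ?Q x * (?F^2 - ?G)"
    using Suc by auto
  have ne: "x - a n \<noteq> 0" using Suc.prems by auto
  have e0: "(\<Prod>j<Suc n. [:-a j,1:]) = ?Q * [:-a n,1:]" by simp
  have e1: "pderiv (\<Prod>j<Suc n. [:-a j,1:]) = ?Q + [:-a n,1:] * pderiv ?Q"
    unfolding e0 pderiv_mult pderiv_lin by (simp only: mult_1_right)
  have e2: "pderiv (pderiv (\<Prod>j<Suc n. [:-a j,1:])) = 2 * pderiv ?Q + [:-a n,1:] * pderiv (pderiv ?Q)"
    unfolding e1 pderiv_add pderiv_mult pderiv_lin by (simp only: mult_1_right mult_2 add_ac)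
  have aux: "\<And>Q F G d::real. d \<noteq> 0 \<Longrightarrow>
      Q + d * (Q * F) = (Q * d) * (F + 1/d) \<and> 2 * (Q * F) + d * (Q * (F^2 - G)) = (Q * d) * ((F + 1/d)^2 - (G + 1/d^2))"
    by (simp add: field_simps power2_eq_square)
  have "poly (\<Prod>j<Suc n. [:-a j,1:]) x = poly ?Q x * (x - a n)" by (simp add: algebra_simps)
  moreover have "(\<Sum>j<Suc n. 1/(x - a j)) = ?F + 1/(x - a n)" by simp
  moreover have "(\<Sum>j<Suc n. 1/(x - a j)^2) = ?G + 1/(x - a n)^2" by simp
  moreover have "poly (pderiv (\<Prod>j<Suc n. [:-a j,1:])) x = poly ?Q x + (x - a n) * poly (pderiv ?Q) x"
    unfolding e1 by (simp add: algebra_simps)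
  moreover have "poly (pderiv (pderiv (\<Prod>j<Suc n. [:-a j,1:]))) x = 2 * poly (pderiv ?Q) x + (x - a n) * poly (pderiv (pderiv ?Q)) x"
    unfolding e2 by (simp add: algebra_simps)
  ultimately show ?case
    using aux[OF ne] IH by simp
qed




lemma lagrange_lc:
  fixes s :: "nat \<Rightarrow> real" and g :: "real poly"
  assumes inj: "inj_on s {..<t}" and dg: "degree g < t"
  shows "(\<Sum>k<t. poly g (s k) / (\<Prod>l\<in>{..<t}-{k}. (s k - s l))) = coeff g (t-1)"
proof -
  define c where "c k = poly g (s k) / (\<Prod>l\<in>{..<t}-{k}. (s k - s l))" for k
  define P where "P k = (\<Prod>l\<in>{..<t}-{k}. [:-s l,1:])" for k
  define L where "L = (\<Sum>k<t. smult (c k) (P k))"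
  have cardk: "k < t \<Longrightarrow> card ({..<t}-{k}) = t - 1" for k by simp
  have Pdeg: "k < t \<Longrightarrow> degree (P k) = t - 1 \<and> coeff (P k) (t-1) = 1" for k
    using lin_prod_deg[of "{..<t}-{k}" s] cardk unfolding P_def by simp
  have Dnz: "k < t \<Longrightarrow> (\<Prod>l\<in>{..<t}-{k}. (s k - s l)) \<noteq> 0" for k
    using inj by (auto simp: inj_on_def)
  have evalL: "poly L (s i) = poly g (s i)" if "i < t" for i
  proof -
    have "poly L (s i) = (\<Sum>k<t. c k * (\<Prod>l\<in>{..<t}-{k}. (s i - s l)))"
      unfolding L_def P_def by (simp add: poly_sum poly_prod)
    also have "\<dots> = c i * (\<Prod>l\<in>{..<t}-{i}. (s i - s l)) + (\<Sum>k\<in>{..<t}-{i}. c k * (\<Prod>l\<in>{..<t}-{k}. (s i - s l)))"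
      using that by (simp add: sum.remove)
    also have "(\<Sum>k\<in>{..<t}-{i}. c k * (\<Prod>l\<in>{..<t}-{k}. (s i - s l))) = 0"
    proof (rule sum.neutral, intro ballI)
      fix k assume "k \<in> {..<t}-{i}"
      then have "i \<in> {..<t}-{k}" using that by auto
      then show "c k * (\<Prod>l\<in>{..<t}-{k}. (s i - s l)) = 0" by (metis (no_types, lifting) finite_Diff finite_lessThan mult_eq_0_iff prod_zero_iff right_minus_eq)
    qed
    finally show ?thesis using Dnz[OF that] unfolding c_def by simp
  qed
  have degL: "degree L \<le> t - 1"
    unfolding L_def
  proof (rule degree_sum_le)
    fix k assume "k \<in> {..<t}"
    then show "degree (smult (c k) (P k)) \<le> t - 1" using Pdeg[of k] degree_smult_le[of "c k" "P k"] by simp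
  qed simp
  have "g - L = 0"
  proof (rule zero_lemma[OF _ inj])
    show "degree (g - L) < t" using degL dg degree_diff_le_max[of g L] by linarith
    show "\<forall>i<t. poly (g - L) (s i) = 0" using evalL by simp
  qed
  then have "g = L" by simp
  then have "coeff g (t-1) = (\<Sum>k<t. c k * coeff (P k) (t-1))" unfolding L_def by (simp add: coeff_sum)
  also have "\<dots> = (\<Sum>k<t. c k)" using Pdeg by simp
  finally show ?thesis unfolding c_def by simp
qed




lemma gen1:
  fixes lam :: "nat \<Rightarrow> real"
  assumes n2: "n \<ge> 2" and sd: "\<forall>i j. i < j \<longrightarrow> j < n \<longrightarrow> lam j < lam i"
  shows "\<exists>\<sigma> S. (\<forall>i<n-1. lam (Suc i) < \<sigma> i \<and> \<sigma> i < lam i) \<and>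
     (\<forall>i<n-1. (\<Sum>j<n. 1/(\<sigma> i - lam j)) = 0) \<and>
     (\<forall>x. poly (pderiv (\<Prod>j<n. [:-lam j,1:])) x = real n * (\<Prod>i<n-1. (x - \<sigma> i))) \<and>
     (\<forall>i<n-1. \<forall>j<n. S i j \<ge> 0) \<and> (\<forall>i<n-1. (\<Sum>j<n. S i j) = 1) \<and>
     (\<forall>j<n. (\<Sum>i<n-1. S i j) = (real n - 1)/real n) \<and>
     (\<forall>i<n-1. \<sigma> i = (\<Sum>j<n. S i j * lam j))"
proof -
  define Q where "Q = (\<Prod>j<n. [:-lam j,1:])"
  have sle: "i \<le> j \<Longrightarrow> j < n \<Longrightarrow> lam j \<le> lam i" for i j
    using sd by (cases "i = j") (auto simp: less_le)
  have dQ: "i < n \<Longrightarrow> poly (pderiv Q) (lam i) = (\<Prod>l\<in>{..<n}-{i}. (lam i - lam l))" for i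
    unfolding Q_def by (rule pderiv_prod_eval) auto
  have sgn: "poly (pderiv Q) (lam (Suc i)) * poly (pderiv Q) (lam i) < 0" if i: "i < n - 1" for i
  proof -
    define A where "A = {..<n}-{i,Suc i}"
    have fA: "finite A" unfolding A_def by simp
    have e1: "(\<Prod>l\<in>{..<n}-{i}. (lam i - lam l)) = (lam i - lam (Suc i)) * (\<Prod>l\<in>A. (lam i - lam l))"
    proof -
      have "Suc i \<in> {..<n}-{i}" using i by auto
      then have "(\<Prod>l\<in>{..<n}-{i}. (lam i - lam l)) = (lam i - lam (Suc i)) * (\<Prod>l\<in>({..<n}-{i})-{Suc i}. (lam i - lam l))"
        by (intro prod.remove) auto
      moreover have "({..<n}-{i})-{Suc i} = A" unfolding A_def by auto
      ultimately show ?thesis by simp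
    qed
    have e2: "(\<Prod>l\<in>{..<n}-{Suc i}. (lam (Suc i) - lam l)) = (lam (Suc i) - lam i) * (\<Prod>l\<in>A. (lam (Suc i) - lam l))"
    proof -
      have "i \<in> {..<n}-{Suc i}" using i by auto
      then have "(\<Prod>l\<in>{..<n}-{Suc i}. (lam (Suc i) - lam l)) = (lam (Suc i) - lam i) * (\<Prod>l\<in>({..<n}-{Suc i})-{i}. (lam (Suc i) - lam l))"
        by (intro prod.remove) auto
      moreover have "({..<n}-{Suc i})-{i} = A" unfolding A_def by auto
      ultimately show ?thesis by simp
    qed
    have pos: "(\<Prod>l\<in>A. (lam i - lam l) * (lam (Suc i) - lam l)) > 0"
    proof (rule prod_pos)
      fix l assume l: "l \<in> A"
      then have lo: "l < i \<or> Suc i < l" and ln: "l < n" unfolding A_def by auto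
      from lo show "(lam i - lam l) * (lam (Suc i) - lam l) > 0"
      proof
        assume "l < i"
        then have "lam i < lam l" "lam (Suc i) < lam l" using sd i by auto
        then show ?thesis by (simp add: mult_neg_neg)
      next
        assume "Suc i < l"
        then have "lam l < lam i" "lam l < lam (Suc i)" using sd ln by auto
        then show ?thesis by simp
      qed
    qed
    have d: "lam (Suc i) < lam i" using sd i by auto
    have "poly (pderiv Q) (lam (Suc i)) * poly (pderiv Q) (lam i) =
       ((lam (Suc i) - lam i) * (lam i - lam (Suc i))) * (\<Prod>l\<in>A. (lam i - lam l) * (lam (Suc i) - lam l))"
    proof -
      have "Suc i < n" "i < n" using i by auto
      then have "poly (pderiv Q) (lam (Suc i)) * poly (pderiv Q) (lam i) =
          ((lam (Suc i) - lam i) * (\<Prod>l\<in>A. (lam (Suc i) - lam l))) * ((lam i - lam (Suc i)) * (\<Prod>l\<in>A. (lam i - lam l)))"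
        by (simp only: dQ e1 e2)
      also have "\<dots> = ((lam (Suc i) - lam i) * (lam i - lam (Suc i))) * ((\<Prod>l\<in>A. (lam i - lam l)) * (\<Prod>l\<in>A. (lam (Suc i) - lam l)))"
        by (simp only: mult_ac)
      finally show ?thesis by (simp only: prod.distrib)
    qed
    moreover have "(lam (Suc i) - lam i) * (lam i - lam (Suc i)) < 0" using d by (simp add: mult_neg_pos)
    ultimately show ?thesis using pos by (simp add: mult_neg_pos)
  qed
  have "\<forall>i<n-1. \<exists>x. lam (Suc i) < x \<and> x < lam i \<and> poly (pderiv Q) x = 0"
  proof (intro allI impI)
    fix i assume i: "i < n - 1"
    have "lam (Suc i) < lam i" using sd i by auto
    then show "\<exists>x. lam (Suc i) < x \<and> x < lam i \<and> poly (pderiv Q) x = 0"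
      using poly_IVT[OF _ sgn[OF i]] by blast
  qed
  then obtain \<sigma> where \<sigma>: "\<forall>i<n-1. lam (Suc i) < \<sigma> i \<and> \<sigma> i < lam i \<and> poly (pderiv Q) (\<sigma> i) = 0"
    by metis
  have slt: "i < k \<Longrightarrow> k < n - 1 \<Longrightarrow> \<sigma> k < \<sigma> i" for i k
  proof -
    assume ik: "i < k" "k < n - 1"
    then have "lam k \<le> lam (Suc i)" using sle by auto
    moreover have "\<sigma> k < lam k" "lam (Suc i) < \<sigma> i" using \<sigma> ik by auto
    ultimately show ?thesis by linarith
  qed
  have inj: "inj_on \<sigma> {..<n-1}"
    by (rule inj_onI) (metis lessThan_iff less_irrefl linorder_neqE_nat slt)
  have nolam: "\<sigma> i \<noteq> lam j" if "i < n-1" "j < n" for i j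
  proof (cases "j \<le> i")
    case True then have "lam i \<le> lam j" using sle that by auto
    moreover have "\<sigma> i < lam i" using \<sigma> that by auto
    ultimately show ?thesis by linarith
  next
    case False then have "lam j \<le> lam (Suc i)" using sle that by auto
    moreover have "lam (Suc i) < \<sigma> i" using \<sigma> that by auto
    ultimately show ?thesis by linarith
  qed
  have Qnz: "poly Q (\<sigma> i) \<noteq> 0" if "i < n-1" for i
    unfolding Q_def poly_prod using nolam[OF that] by (simp add: prod_zero_iff)
  have LD: "poly (pderiv Q) (\<sigma> i) = poly Q (\<sigma> i) * (\<Sum>j<n. 1/(\<sigma> i - lam j)) \<and>
     poly (pderiv (pderiv Q)) (\<sigma> i) = poly Q (\<sigma> i) * ((\<Sum>j<n. 1/(\<sigma> i - lam j))^2 - (\<Sum>j<n. 1/(\<sigma> i - lam j)^2))"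
    if "i < n-1" for i
    unfolding Q_def by (rule log_deriv) (use nolam[OF that] in auto)
  have F0: "(\<Sum>j<n. 1/(\<sigma> i - lam j)) = 0" if "i < n-1" for i
    using LD[OF that] Qnz[OF that] \<sigma> that by auto
  define P where "P = (\<Prod>i<n-1. [:-\<sigma> i,1:])"
  have Qdeg: "degree Q = n \<and> coeff Q n = 1" using lin_prod_deg[of "{..<n}" lam] unfolding Q_def by simp
  have Pdeg: "degree P = n-1 \<and> coeff P (n-1) = 1" using lin_prod_deg[of "{..<n-1}" \<sigma>] unfolding P_def by simp
  have fact: "pderiv Q = smult (real n) P"
  proof -
    define R where "R = pderiv Q - smult (real n) P"
    have cR: "coeff R k = 0" if "k > n - 2" for k
    proof (cases "k = n - 1")
      case True
      have "coeff (pderiv Q) k = real n"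
        using True n2 Qdeg by (simp add: coeff_pderiv)
      then show ?thesis using True Pdeg unfolding R_def by simp
    next
      case False
      then have "k > n - 1" using that by linarith
      then have "coeff Q (Suc k) = 0" "coeff P k = 0" using Qdeg Pdeg by (auto intro: coeff_eq_0)
      then show ?thesis unfolding R_def by (simp add: coeff_pderiv)
    qed
    have "degree R \<le> n - 2" by (rule degree_le) (use cR in auto)
    then have "degree R < n - 1" using n2 by linarith
    moreover have "\<forall>i<n-1. poly R (\<sigma> i) = 0"
    proof (intro allI impI)
      fix i assume i: "i < n - 1"
      have "(\<Prod>l<n-1. (\<sigma> i - \<sigma> l)) = 0" using i by (intro prod_zero) auto
      then show "poly R (\<sigma> i) = 0" unfolding R_def P_def using \<sigma> i by (simp add: poly_prod)
    qed
    ultimately have "R = 0" using zero_lemma inj by blast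
    then show ?thesis unfolding R_def by simp
  qed
  have factx: "poly (pderiv Q) x = real n * (\<Prod>i<n-1. (x - \<sigma> i))" for x
    unfolding fact P_def by (simp add: poly_prod)
  define W where "W i = (\<Sum>j<n. 1/(\<sigma> i - lam j)^2)" for i
  have Wpos: "W i > 0" if "i < n-1" for i
    unfolding W_def using nolam[OF that] n2 by (intro sum_pos) (auto simp: lessThan_empty_iff)
  define S where "S i j = 1/((\<sigma> i - lam j)^2 * W i)" for i j
  have Snn: "\<forall>i<n-1. \<forall>j<n. S i j \<ge> 0"
  proof (intro allI impI)
    fix i j assume i: "i < n-1"
    have "0 \<le> (\<sigma> i - lam j)^2 * W i" using Wpos[OF i] by simp
    then show "S i j \<ge> 0" unfolding S_def by simp
  qed
  have Srow: "(\<Sum>j<n. S i j) = 1" if "i < n-1" for i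
  proof -
    have "(\<Sum>j<n. S i j) = (\<Sum>j<n. 1/(\<sigma> i - lam j)^2) / W i"
      unfolding S_def by (simp add: sum_divide_distrib field_simps)
    then show ?thesis using Wpos[OF that] unfolding W_def by simp
  qed
  have Smu: "\<sigma> i = (\<Sum>j<n. S i j * lam j)" if i: "i < n-1" for i
  proof -
    have "(\<Sum>j<n. S i j * (lam j - \<sigma> i)) = (\<Sum>j<n. - (1/(\<sigma> i - lam j)) / W i)"
    proof (rule sum.cong[OF refl])
      fix j assume "j \<in> {..<n}"
      then have "\<sigma> i - lam j \<noteq> 0" using nolam[OF i] by auto
      moreover have "\<And>d w::real. d \<noteq> 0 \<Longrightarrow> w \<noteq> 0 \<Longrightarrow> 1/(d^2*w) * (-d) = -(1/d)/w"
        by (simp add: field_simps power2_eq_square)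
      ultimately show "S i j * (lam j - \<sigma> i) = - (1/(\<sigma> i - lam j)) / W i"
        unfolding S_def using Wpos[OF i] by (metis minus_diff_eq less_irrefl)
    qed
    also have "\<dots> = - (\<Sum>j<n. 1/(\<sigma> i - lam j)) / W i"
      by (simp add: sum_divide_distrib sum_negf)
    also have "\<dots> = 0" using F0[OF i] by simp
    finally have "(\<Sum>j<n. S i j * lam j) - (\<Sum>j<n. S i j * \<sigma> i) = 0"
      by (simp add: algebra_simps sum_subtractf)
    moreover have "(\<Sum>j<n. S i j * \<sigma> i) = \<sigma> i" using Srow[OF i] by (simp add: sum_distrib_right[symmetric])
    ultimately show ?thesis by simp
  qed
  have Scol: "(\<Sum>i<n-1. S i j) = (real n - 1)/real n" if j: "j < n" for j
  proof -
    define r where "r = (\<Prod>l\<in>{..<n}-{j}. [:-lam l,1:])"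
    define g where "g = pderiv r"
    have rdeg: "degree r = n - 1 \<and> coeff r (n-1) = 1"
      using lin_prod_deg[of "{..<n}-{j}" lam] j unfolding r_def by simp
    have gdeg: "degree g < n - 1" unfolding g_def using rdeg n2 by (simp add: degree_pderiv)
    have sn: "Suc (n-1-1) = n - 1" using n2 by simp
    have gco: "coeff g (n-1-1) = real n - 1"
      unfolding g_def coeff_pderiv sn using rdeg n2 by (simp add: of_nat_diff)
    have Qr: "Q = [:-lam j,1:] * r" unfolding Q_def r_def using j by (intro prod.remove) auto
    have dQr: "pderiv Q = r + [:-lam j,1:] * g" unfolding Qr g_def pderiv_mult pderiv_lin by simp
    have Dd: "poly (pderiv P) (\<sigma> i) = (\<Prod>l\<in>{..<n-1}-{i}. (\<sigma> i - \<sigma> l))" if "i < n-1" for i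
      unfolding P_def by (rule pderiv_prod_eval) (use that in auto)
    have Sform: "S i j = poly g (\<sigma> i) / (\<Prod>l\<in>{..<n-1}-{i}. (\<sigma> i - \<sigma> l)) / real n" if i: "i < n-1" for i
    proof -
      have ne: "\<sigma> i - lam j \<noteq> 0" using nolam[OF i j] by simp
      have q: "poly Q (\<sigma> i) = (\<sigma> i - lam j) * poly r (\<sigma> i)" unfolding Qr by (simp add: algebra_simps)
      have "0 = poly r (\<sigma> i) + (\<sigma> i - lam j) * poly g (\<sigma> i)"
      proof -
        have "poly (pderiv Q) (\<sigma> i) = 0" using \<sigma> i by auto
        then show ?thesis unfolding dQr by (simp add: algebra_simps)
      qed
      moreover have "\<And>d R G::real. d \<noteq> 0 \<Longrightarrow> 0 = R + d * G \<Longrightarrow> G = - (d * R) / d^2"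
        by (simp add: field_simps power2_eq_square)
      ultimately have gv: "poly g (\<sigma> i) = - poly Q (\<sigma> i) / (\<sigma> i - lam j)^2"
        using ne unfolding q by blast
      have "poly (pderiv (pderiv Q)) (\<sigma> i) = - poly Q (\<sigma> i) * W i"
        using LD[OF i] F0[OF i] unfolding W_def by simp
      moreover have "poly (pderiv (pderiv Q)) (\<sigma> i) = real n * (\<Prod>l\<in>{..<n-1}-{i}. (\<sigma> i - \<sigma> l))"
        unfolding fact pderiv_smult using Dd[OF i] by simp
      ultimately have "(\<Prod>l\<in>{..<n-1}-{i}. (\<sigma> i - \<sigma> l)) = - poly Q (\<sigma> i) * W i / real n"
        using n2 by (simp add: field_simps)
      moreover have "\<And>d q w m D::real. d \<noteq> 0 \<Longrightarrow> q \<noteq> 0 \<Longrightarrow> w \<noteq> 0 \<Longrightarrow> m \<noteq> 0 \<Longrightarrow> D = - q * w / m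
          \<Longrightarrow> 1/(d^2*w) = (-q/d^2)/D/m"
        by (simp add: field_simps power2_eq_square)
      moreover have "real n \<noteq> 0" using n2 by simp
      moreover have "W i \<noteq> 0" using Wpos[OF i] by simp
      ultimately show ?thesis unfolding S_def gv using Qnz[OF i] ne by blast
    qed
    have "(\<Sum>i<n-1. S i j) = (\<Sum>i<n-1. poly g (\<sigma> i) / (\<Prod>l\<in>{..<n-1}-{i}. (\<sigma> i - \<sigma> l))) / real n"
      using Sform by (simp add: sum_divide_distrib)
    also have "\<dots> = coeff g (n-1-1) / real n"
      using lagrange_lc[OF inj gdeg] by simp
    finally show ?thesis using gco by simp
  qed
  show ?thesis
    apply (rule exI[of _ \<sigma>], rule exI[of _ S])
    using \<sigma> F0 factx Snn Srow Scol Smu unfolding Q_def by blast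
qed




lemma gen:
  fixes lam :: "nat \<Rightarrow> real"
  assumes n2: "n \<ge> 2" and sd: "\<forall>i j. i < j \<longrightarrow> j < n \<longrightarrow> lam j < lam i"
  shows "\<exists>\<sigma> S. (\<forall>i<n-1. lam (Suc i) < \<sigma> i \<and> \<sigma> i < lam i) \<and>
     (\<forall>x. poly (pderiv (\<Prod>j<n. [:-lam j,1:])) x = real n * (\<Prod>i<n-1. (x - \<sigma> i))) \<and>
     (\<forall>i<n-1. \<forall>j<n. S i j \<ge> 0) \<and> (\<forall>i<n-1. (\<Sum>j<n. S i j) = 1) \<and>
     (\<forall>j<n. (\<Sum>i<n-1. S i j) = (real n - 1)/real n) \<and>
     (\<forall>i<n-1. \<sigma> i = (\<Sum>j<n. S i j * lam j)) \<and>
     (\<forall>k. 1 \<le> k \<longrightarrow> k \<le> n - 1 \<longrightarrow> (\<Sum>i<k. \<sigma> i) \<ge> real k / (real k + 1) * (\<Sum>j<Suc k. lam j))"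
proof -
  obtain \<sigma> S where G: "(\<forall>i<n-1. lam (Suc i) < \<sigma> i \<and> \<sigma> i < lam i)"
     "(\<forall>i<n-1. (\<Sum>j<n. 1/(\<sigma> i - lam j)) = 0)"
     "(\<forall>x. poly (pderiv (\<Prod>j<n. [:-lam j,1:])) x = real n * (\<Prod>i<n-1. (x - \<sigma> i)))"
     "(\<forall>i<n-1. \<forall>j<n. S i j \<ge> 0)" "(\<forall>i<n-1. (\<Sum>j<n. S i j) = 1)"
     "(\<forall>j<n. (\<Sum>i<n-1. S i j) = (real n - 1)/real n)"
     "(\<forall>i<n-1. \<sigma> i = (\<Sum>j<n. S i j * lam j))"
    using gen1[OF n2 sd] by blast
  have sle: "i \<le> j \<Longrightarrow> j < n \<Longrightarrow> lam j \<le> lam i" for i j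
    using sd by (cases "i = j") (auto simp: less_le)
  have ineq: "(\<Sum>i<k. \<sigma> i) \<ge> real k / (real k + 1) * (\<Sum>j<Suc k. lam j)"
    if k: "1 \<le> k" "k \<le> n - 1" for k
  proof -
    have k2: "Suc k \<ge> 2" using k by simp
    have sdk: "\<forall>i j. i < j \<longrightarrow> j < Suc k \<longrightarrow> lam j < lam i" using sd k by auto
    obtain \<tau> T where H: "(\<forall>i<Suc k-1. lam (Suc i) < \<tau> i \<and> \<tau> i < lam i)"
     "(\<forall>i<Suc k-1. (\<Sum>j<Suc k. 1/(\<tau> i - lam j)) = 0)"
     "(\<forall>j<Suc k. (\<Sum>i<Suc k-1. T i j) = (real (Suc k) - 1)/real (Suc k))"
     "(\<forall>i<Suc k-1. \<tau> i = (\<Sum>j<Suc k. T i j * lam j))"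
      using gen1[OF k2 sdk] by blast
    have "(\<Sum>i<k. \<tau> i) = (\<Sum>i<k. \<Sum>j<Suc k. T i j * lam j)" using H(4) by simp
    also have "\<dots> = (\<Sum>j<Suc k. (\<Sum>i<k. T i j) * lam j)"
      by (subst sum.swap) (simp add: sum_distrib_right)
    also have "\<dots> = (\<Sum>j<Suc k. real k / (real k + 1) * lam j)"
      using H(3) by (intro sum.cong) auto
    also have "\<dots> = real k / (real k + 1) * (\<Sum>j<Suc k. lam j)"
      by (rule sum_distrib_left[symmetric])
    finally have tsum: "(\<Sum>i<k. \<tau> i) = real k / (real k + 1) * (\<Sum>j<Suc k. lam j)" .
    have "\<tau> i \<le> \<sigma> i" if i: "i < k" for i
    proof (rule ccontr)
      assume "\<not> \<tau> i \<le> \<sigma> i"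
      then have lt: "\<sigma> i < \<tau> i" by simp
      have si: "lam (Suc i) < \<sigma> i" "\<sigma> i < lam i" using G(1) i k by auto
      have ti: "lam (Suc i) < \<tau> i" "\<tau> i < lam i" using H(1) i by auto
      have "(\<Sum>j<Suc k. 1/(\<tau> i - lam j)) < (\<Sum>j<Suc k. 1/(\<sigma> i - lam j))"
      proof (rule sum_strict_mono)
        fix j assume j: "j \<in> {..<Suc k}"
        show "1/(\<tau> i - lam j) < 1/(\<sigma> i - lam j)"
        proof (cases "j \<le> i")
          case True
          then have "lam i \<le> lam j" using sle i k by auto
          then have "\<sigma> i - lam j < 0" "\<tau> i - lam j < 0" using si ti by auto
          then show ?thesis using lt by (simp add: divide_simps)
        next
          case False
          then have "lam j \<le> lam (Suc i)" using sle j k by auto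
          then have "\<sigma> i - lam j > 0" "\<tau> i - lam j > 0" using si ti by auto
          then show ?thesis using lt by (simp add: divide_simps)
        qed
      qed (auto simp: lessThan_empty_iff)
      then have pos: "0 < (\<Sum>j<Suc k. 1/(\<sigma> i - lam j))" using H(2) i by auto
      have sub: "{..<Suc k} \<subseteq> {..<n}" using k by auto
      have "(\<Sum>j<n. 1/(\<sigma> i - lam j)) = (\<Sum>j\<in>{..<n}-{..<Suc k}. 1/(\<sigma> i - lam j)) + (\<Sum>j<Suc k. 1/(\<sigma> i - lam j))"
        using sum.subset_diff[OF sub] by simp
      moreover have "(\<Sum>j\<in>{..<n}-{..<Suc k}. 1/(\<sigma> i - lam j)) \<ge> 0"
      proof (rule sum_nonneg)
        fix j assume "j \<in> {..<n}-{..<Suc k}"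
        then have "lam j \<le> lam (Suc i)" using sle i by auto
        then show "0 \<le> 1/(\<sigma> i - lam j)" using si by simp
      qed
      ultimately have "(\<Sum>j<n. 1/(\<sigma> i - lam j)) > 0" using pos by linarith
      then show False using G(2) i k by auto
    qed
    then have "(\<Sum>i<k. \<tau> i) \<le> (\<Sum>i<k. \<sigma> i)" by (intro sum_mono) auto
    then show ?thesis using tsum by simp
  qed
  show ?thesis
    apply (rule exI[of _ \<sigma>], rule exI[of _ S])
    using G ineq by blast
qed




lemma subseq_conv:
  fixes f :: "nat \<Rightarrow> 'a \<Rightarrow> real"
  assumes "finite I" "\<forall>m. \<forall>i\<in>I. \<bar>f m i\<bar> \<le> B"
  shows "\<exists>r L. strict_mono r \<and> (\<forall>i\<in>I. (\<lambda>m. f (r m) i) \<longlonglongrightarrow> L i)"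
  using assms
proof (induction I rule: finite_induct)
  case empty
  show ?case by (rule exI[of _ id]) (auto simp: strict_mono_def)
next
  case (insert a F)
  then obtain r L where r: "strict_mono r" "\<forall>i\<in>F. (\<lambda>m. f (r m) i) \<longlonglongrightarrow> L i" by auto
  obtain s where s: "strict_mono s" "monoseq (\<lambda>m. f (r (s m)) a)"
    using seq_monosub[of "\<lambda>m. f (r m) a"] by blast
  have "Bseq (\<lambda>m. f (r (s m)) a)"
    by (rule BseqI'[of _ B]) (use insert.prems in auto)
  then have "convergent (\<lambda>m. f (r (s m)) a)" using s(2) Bseq_monoseq_convergent by blast
  then obtain l where l: "(\<lambda>m. f (r (s m)) a) \<longlonglongrightarrow> l" by (auto simp: convergent_def)
  have "\<forall>i\<in>insert a F. (\<lambda>m. f ((r \<circ> s) m) i) \<longlonglongrightarrow> (L(a := l)) i"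
  proof
    fix i assume i: "i \<in> insert a F"
    show "(\<lambda>m. f ((r \<circ> s) m) i) \<longlonglongrightarrow> (L(a := l)) i"
    proof (cases "i = a")
      case True then show ?thesis using l by simp
    next
      case False
      then have "i \<in> F" "i \<noteq> a" using i by auto
      then have "((\<lambda>m. f (r m) i) \<circ> s) \<longlonglongrightarrow> L i" using r s by (intro LIMSEQ_subseq_LIMSEQ) auto
      then show ?thesis using \<open>i \<noteq> a\<close> by (simp add: comp_def)
    qed
  qed
  moreover have "strict_mono (r \<circ> s)" using r s by (simp add: strict_mono_o)
  ultimately show ?case by blast
qed

lemma order_lin_prod:
  fixes a :: "'b \<Rightarrow> real"
  assumes "finite A"
  shows "order x (\<Prod>l\<in>A. [:-a l,1:]) = card {l\<in>A. a l = x}"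
  using assms
proof (induction A rule: finite_induct)
  case empty then show ?case by simp
next
  case (insert y F)
  have nz: "[:-a y,1:] * (\<Prod>l\<in>F. [:-a l,1:]) \<noteq> 0"
  proof -
    have "[:-a y,1:] \<noteq> (0::real poly)" by simp
    then show ?thesis using lin_prod_nz[OF insert(1), of a] by (rule no_zero_divisors)
  qed
  have o1: "order x [:-a y,1:] = (if a y = x then 1 else 0)"
  proof (cases "a y = x")
    case True then show ?thesis using order_power_n_n[of x 1] by simp
  next
    case False
    then have "poly [:-a y,1:] x \<noteq> 0" by simp
    then show ?thesis using False order_root[of "[:-a y,1:]" x] by auto
  qed
  have "{l\<in>insert y F. a l = x} = (if a y = x then insert y {l\<in>F. a l = x} else {l\<in>F. a l = x})" by auto
  then have "card {l\<in>insert y F. a l = x} = (if a y = x then 1 else 0) + card {l\<in>F. a l = x}"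
    using insert by auto
  moreover have "(\<Prod>l\<in>insert y F. [:-a l,1:]) = [:-a y,1:] * (\<Prod>l\<in>F. [:-a l,1:])"
    using insert by simp
  ultimately show ?case using insert(3) nz o1 order_mult[OF nz, of x] by simp
qed

lemma sorted_count_eq:
  fixes a b :: "nat \<Rightarrow> real"
  assumes sa: "\<forall>i j. i \<le> j \<longrightarrow> j < t \<longrightarrow> a j \<le> a i"
    and sb: "\<forall>i j. i \<le> j \<longrightarrow> j < t \<longrightarrow> b j \<le> b i"
    and c: "\<forall>x. card {k. k < t \<and> a k = x} = card {k. k < t \<and> b k = x}"
  shows "\<forall>i<t. a i = b i"
proof -
  define xs where "xs = rev (map a [0..<t])"
  define ys where "ys = rev (map b [0..<t])"
  have sx: "sorted xs" unfolding xs_def sorted_iff_nth_mono_less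
    using sa by (auto simp: rev_nth)
  have sy: "sorted ys" unfolding ys_def sorted_iff_nth_mono_less
    using sb by (auto simp: rev_nth)
  have cnt: "count (mset (map f [0..<t])) x = card {k. k < t \<and> f k = x}" for f :: "nat \<Rightarrow> real" and x
  proof -
    have "count (mset (map f [0..<t])) x = card {i. i < t \<and> x = f i}"
      unfolding count_mset count_list_eq_length_filter length_filter_conv_card
      by (intro arg_cong[where f=card]) auto
    also have "{i. i < t \<and> x = f i} = {k. k < t \<and> f k = x}" by auto
    finally show ?thesis .
  qed
  have "mset xs = mset ys" unfolding xs_def ys_def mset_rev
    unfolding multiset_eq_iff cnt using c by blast
  then have "sort ys = xs" using sx by (intro properties_for_sort) auto
  then have "xs = ys" using sy by (simp add: sorted_sort_id)
  then have "map a [0..<t] = map b [0..<t]" unfolding xs_def ys_def by simp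
  then show ?thesis by (metis add_0 diff_zero nth_map_upt)
qed




lemma limit_main:
  fixes n :: nat and lam mu :: "nat \<Rightarrow> real"
  assumes n2: "n \<ge> 2"
    and lam_sorted: "\<forall>i j. i \<le> j \<longrightarrow> j < n \<longrightarrow> lam j \<le> lam i"
    and mu_sorted: "\<forall>i j. i \<le> j \<longrightarrow> j < n - 1 \<longrightarrow> mu j \<le> mu i"
    and mu_crit: "\<forall>x. order x (pderiv (\<Prod>j<n. [:- lam j, 1:]))
                      = card {k. k < n - 1 \<and> mu k = x}"
  shows "\<exists>S. (\<forall>i<n-1. \<forall>j<n. S i j \<ge> 0) \<and> (\<forall>i<n-1. (\<Sum>j<n. S i j) = 1) \<and>
     (\<forall>j<n. (\<Sum>i<n-1. S i j) = (real n - 1)/real n) \<and>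
     (\<forall>i<n-1. mu i = (\<Sum>j<n. S i j * lam j)) \<and>
     (\<forall>k. 1 \<le> k \<longrightarrow> k \<le> n - 1 \<longrightarrow> (\<Sum>i<k. mu i) \<ge> real k / (real k + 1) * (\<Sum>j<Suc k. lam j))"
proof -
  define lm where "lm m j = lam j - real j / real (Suc m)" for m j
  have lmsd: "\<forall>i j. i < j \<longrightarrow> j < n \<longrightarrow> lm m j < lm m i" for m
  proof (intro allI impI)
    fix i j assume ij: "i < j" "j < n"
    have "real i / real (Suc m) < real j / real (Suc m)" using ij by (intro divide_strict_right_mono) auto
    moreover have "lam j \<le> lam i" using lam_sorted ij by auto
    ultimately show "lm m j < lm m i" unfolding lm_def by linarith
  qed
  have lmb: "lam j - real j \<le> lm m j \<and> lm m j \<le> lam j" for m j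
  proof -
    have "real j * 1 \<le> real j * real (Suc m)" by (intro mult_left_mono) auto
    then have "real j / real (Suc m) \<le> real j" by (simp add: divide_le_eq)
    moreover have "0 \<le> real j / real (Suc m)" by simp
    ultimately show ?thesis unfolding lm_def by linarith
  qed
  define P where "P m \<sigma> S \<longleftrightarrow> (\<forall>i<n-1. lm m (Suc i) < \<sigma> i \<and> \<sigma> i < lm m i) \<and>
     (\<forall>x. poly (pderiv (\<Prod>j<n. [:-lm m j,1:])) x = real n * (\<Prod>i<n-1. (x - \<sigma> i))) \<and>
     (\<forall>i<n-1. \<forall>j<n. S i j \<ge> 0) \<and> (\<forall>i<n-1. (\<Sum>j<n. S i j) = 1) \<and>
     (\<forall>j<n. (\<Sum>i<n-1. S i j) = (real n - 1)/real n) \<and>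
     (\<forall>i<n-1. \<sigma> i = (\<Sum>j<n. S i j * lm m j)) \<and>
     (\<forall>k. 1 \<le> k \<longrightarrow> k \<le> n - 1 \<longrightarrow> (\<Sum>i<k. \<sigma> i) \<ge> real k / (real k + 1) * (\<Sum>j<Suc k. lm m j))"
    for m \<sigma> S
  have "\<forall>m. \<exists>\<sigma> S. P m \<sigma> S" unfolding P_def by (intro allI, rule gen[OF n2 lmsd])
  then obtain \<sigma>s Ss where PS: "\<forall>m. P m (\<sigma>s m) (Ss m)" by metis
  have PSm: "P m (\<sigma>s m) (Ss m)" for m using PS by blast
  note PSu = PSm[unfolded P_def]
  note C1 = conjunct1[OF PSu]
  note C2 = conjunct1[OF conjunct2[OF PSu]]
  note C3 = conjunct1[OF conjunct2[OF conjunct2[OF PSu]]]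
  note C4 = conjunct1[OF conjunct2[OF conjunct2[OF conjunct2[OF PSu]]]]
  note C5 = conjunct1[OF conjunct2[OF conjunct2[OF conjunct2[OF conjunct2[OF PSu]]]]]
  note C6 = conjunct1[OF conjunct2[OF conjunct2[OF conjunct2[OF conjunct2[OF conjunct2[OF PSu]]]]]]
  note C7 = conjunct2[OF conjunct2[OF conjunct2[OF conjunct2[OF conjunct2[OF conjunct2[OF PSu]]]]]]
  define B where "B = \<bar>lam 0\<bar> + \<bar>lam (n-1)\<bar> + real n"
  have \<sigma>bd: "\<forall>m. \<forall>i\<in>{..<n-1}. \<bar>\<sigma>s m i\<bar> \<le> B"
  proof (intro allI ballI)
    fix m i assume "i \<in> {..<n-1}"
    then have i: "i < n - 1" by simp
    have a: "lm m (Suc i) < \<sigma>s m i \<and> \<sigma>s m i < lm m i" using C1 i by blast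
    have "lam (n-1) \<le> lam (Suc i)" "lam i \<le> lam 0" using lam_sorted i by auto
    moreover have "real (Suc i) \<le> real n" using i by simp
    ultimately show "\<bar>\<sigma>s m i\<bar> \<le> B" using a lmb[of "Suc i" m] lmb[of i m] unfolding B_def by linarith
  qed
  have Sbd: "\<forall>m. \<forall>p\<in>{..<n-1}\<times>{..<n}. \<bar>Ss m (fst p) (snd p)\<bar> \<le> 1"
  proof (intro allI ballI)
    fix m p assume "p \<in> {..<n-1}\<times>{..<n}"
    then have i: "fst p < n - 1" and j: "snd p < n" by auto
    have nn: "\<forall>j<n. Ss m (fst p) j \<ge> 0" and rs: "(\<Sum>j<n. Ss m (fst p) j) = 1"
      using C3 C4 i by blast+
    have "Ss m (fst p) (snd p) \<le> (\<Sum>j<n. Ss m (fst p) j)"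
      by (rule member_le_sum) (use nn j in auto)
    then show "\<bar>Ss m (fst p) (snd p)\<bar> \<le> 1" using rs nn j by auto
  qed
  obtain r1 L1 where r1: "strict_mono r1" "\<forall>i\<in>{..<n-1}. (\<lambda>m. \<sigma>s (r1 m) i) \<longlonglongrightarrow> L1 i"
    using subseq_conv[OF _ \<sigma>bd] by blast
  obtain r2 L2 where r2: "strict_mono r2"
      "\<forall>p\<in>{..<n-1}\<times>{..<n}. (\<lambda>m. Ss (r1 (r2 m)) (fst p) (snd p)) \<longlonglongrightarrow> L2 p"
    using subseq_conv[of "{..<n-1}\<times>{..<n}" "\<lambda>m p. Ss (r1 m) (fst p) (snd p)" 1] Sbd by auto
  define r where "r = r1 \<circ> r2"
  have r: "strict_mono r" unfolding r_def using r1 r2 by (simp add: strict_mono_o)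
  define sg where "sg i = L1 i" for i
  define St where "St i j = L2 (i, j)" for i j
  have sgl: "(\<lambda>m. \<sigma>s (r m) i) \<longlonglongrightarrow> sg i" if "i < n - 1" for i
  proof -
    have "((\<lambda>m. \<sigma>s (r1 m) i) \<circ> r2) \<longlonglongrightarrow> L1 i" using r1 r2 that by (intro LIMSEQ_subseq_LIMSEQ) auto
    then show ?thesis unfolding sg_def r_def by (simp add: comp_def)
  qed
  have Stl: "(\<lambda>m. Ss (r m) i j) \<longlonglongrightarrow> St i j" if "i < n - 1" "j < n" for i j
    using r2(2) that unfolding St_def r_def by fastforce
  have lml: "(\<lambda>m. lm (r m) j) \<longlonglongrightarrow> lam j" for j
  proof -
    have "(\<lambda>m. lam j - real j * inverse (real (Suc m))) \<longlonglongrightarrow> lam j - real j * 0"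
      by (intro tendsto_intros LIMSEQ_inverse_real_of_nat)
    then have "(\<lambda>m. lm m j) \<longlonglongrightarrow> lam j" unfolding lm_def by (simp add: divide_inverse)
    then have "((\<lambda>m. lm m j) \<circ> r) \<longlonglongrightarrow> lam j" using r by (intro LIMSEQ_subseq_LIMSEQ)
    then show ?thesis by (simp add: comp_def)
  qed
  have Snn: "\<forall>i<n-1. \<forall>j<n. St i j \<ge> 0"
  proof (intro allI impI)
    fix i j assume ij: "i < n-1" "j < n"
    show "St i j \<ge> 0"
      by (rule LIMSEQ_le_const[OF Stl[OF ij]]) (use C3 ij in auto)
  qed
  have Srow: "\<forall>i<n-1. (\<Sum>j<n. St i j) = 1"
  proof (intro allI impI)
    fix i assume i: "i < n-1"
    have "(\<lambda>m. \<Sum>j<n. Ss (r m) i j) \<longlonglongrightarrow> (\<Sum>j<n. St i j)"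
      by (intro tendsto_sum Stl) (use i in auto)
    moreover have "(\<lambda>m. \<Sum>j<n. Ss (r m) i j) = (\<lambda>m. 1)" using C4 i by auto
    ultimately show "(\<Sum>j<n. St i j) = 1" using LIMSEQ_unique tendsto_const by metis
  qed
  have Scol: "\<forall>j<n. (\<Sum>i<n-1. St i j) = (real n - 1)/real n"
  proof (intro allI impI)
    fix j assume j: "j < n"
    have "(\<lambda>m. \<Sum>i<n-1. Ss (r m) i j) \<longlonglongrightarrow> (\<Sum>i<n-1. St i j)"
      by (intro tendsto_sum Stl) (use j in auto)
    moreover have "(\<lambda>m. \<Sum>i<n-1. Ss (r m) i j) = (\<lambda>m. (real n - 1)/real n)" using C5 j by auto
    ultimately show "(\<Sum>i<n-1. St i j) = (real n - 1)/real n" using LIMSEQ_unique tendsto_const by metis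
  qed
  have Smu: "\<forall>i<n-1. sg i = (\<Sum>j<n. St i j * lam j)"
  proof (intro allI impI)
    fix i assume i: "i < n-1"
    have "(\<lambda>m. \<Sum>j<n. Ss (r m) i j * lm (r m) j) \<longlonglongrightarrow> (\<Sum>j<n. St i j * lam j)"
      by (intro tendsto_sum tendsto_mult Stl lml) (use i in auto)
    moreover have "(\<lambda>m. \<Sum>j<n. Ss (r m) i j * lm (r m) j) = (\<lambda>m. \<sigma>s (r m) i)" using C6 i by auto
    ultimately show "sg i = (\<Sum>j<n. St i j * lam j)" using LIMSEQ_unique sgl[OF i] by metis
  qed
  have Sineq: "\<forall>k. 1 \<le> k \<longrightarrow> k \<le> n - 1 \<longrightarrow> (\<Sum>i<k. sg i) \<ge> real k / (real k + 1) * (\<Sum>j<Suc k. lam j)"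
  proof (intro allI impI)
    fix k assume k: "1 \<le> k" "k \<le> n - 1"
    have "(\<lambda>m. \<Sum>i<k. \<sigma>s (r m) i) \<longlonglongrightarrow> (\<Sum>i<k. sg i)"
      by (intro tendsto_sum sgl) (use k in auto)
    moreover have "(\<lambda>m. real k / (real k + 1) * (\<Sum>j<Suc k. lm (r m) j)) \<longlonglongrightarrow> real k / (real k + 1) * (\<Sum>j<Suc k. lam j)"
      by (intro tendsto_intros lml)
    moreover have "\<forall>m. real k / (real k + 1) * (\<Sum>j<Suc k. lm (r m) j) \<le> (\<Sum>i<k. \<sigma>s (r m) i)"
      using C7 k by blast
    ultimately show "(\<Sum>i<k. sg i) \<ge> real k / (real k + 1) * (\<Sum>j<Suc k. lam j)"
      by (intro LIMSEQ_le) auto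
  qed
  have sgsorted: "\<forall>i j. i \<le> j \<longrightarrow> j < n - 1 \<longrightarrow> sg j \<le> sg i"
  proof (intro allI impI)
    fix i j assume ij: "i \<le> j" "j < n - 1"
    have "\<sigma>s (r m) j \<le> \<sigma>s (r m) i" for m
    proof (cases "i = j")
      case False
      then have "i < j" using ij by simp
      have "\<sigma>s (r m) j < lm (r m) j" "lm (r m) (Suc i) < \<sigma>s (r m) i" using C1 ij \<open>i < j\<close> by auto
      moreover have "lm (r m) j \<le> lm (r m) (Suc i)"
      proof (cases "Suc i = j")
        case False
        then have "Suc i < j" "j < n" using \<open>i < j\<close> ij by auto
        then show ?thesis using lmsd[of "r m"] by (auto intro: less_imp_le)
      qed simp
      ultimately show ?thesis by linarith
    qed simp
    then show "sg j \<le> sg i" using ij by (intro LIMSEQ_le[OF sgl sgl]) auto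
  qed
  have polyeq: "poly (pderiv (\<Prod>j<n. [:-lam j,1:])) x = real n * (\<Prod>i<n-1. (x - sg i))" for x
  proof -
    have "(\<lambda>m. poly (pderiv (\<Prod>j<n. [:-lm (r m) j,1:])) x) \<longlonglongrightarrow> poly (pderiv (\<Prod>j<n. [:-lam j,1:])) x"
      unfolding pderiv_prod_poly by (intro tendsto_intros lml)
    moreover have "(\<lambda>m. poly (pderiv (\<Prod>j<n. [:-lm (r m) j,1:])) x) = (\<lambda>m. real n * (\<Prod>i<n-1. (x - \<sigma>s (r m) i)))"
      using C2 by blast
    moreover have "(\<lambda>m. real n * (\<Prod>i<n-1. (x - \<sigma>s (r m) i))) \<longlonglongrightarrow> real n * (\<Prod>i<n-1. (x - sg i))"
      by (intro tendsto_intros sgl) auto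
    ultimately show ?thesis using LIMSEQ_unique by metis
  qed
  have "pderiv (\<Prod>j<n. [:-lam j,1:]) = smult (real n) (\<Prod>i<n-1. [:-sg i,1:])"
    by (rule poly_eq_poly_eq_iff[THEN iffD1]) (auto simp: polyeq poly_prod)
  then have "order x (pderiv (\<Prod>j<n. [:-lam j,1:])) = card {k. k < n - 1 \<and> sg k = x}" for x
    using n2 by (simp add: order_smult order_lin_prod)
  then have "\<forall>i<n-1. mu i = sg i"
    using mu_crit by (intro sorted_count_eq[OF mu_sorted sgsorted]) auto
  then show ?thesis
    apply (intro exI[of _ St])
    using Snn Srow Scol Smu Sineq by auto
qed




lemma block_list:
  fixes f :: "nat \<Rightarrow> real"
  shows "length (concat (map (\<lambda>k. replicate c (f k)) [0..<a])) = a * c \<and>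
         (\<forall>i < a * c. concat (map (\<lambda>k. replicate c (f k)) [0..<a]) ! i = f (i div c))"
proof (induction a)
  case 0 then show ?case by simp
next
  case (Suc a)
  let ?xs = "concat (map (\<lambda>k. replicate c (f k)) [0..<a])"
  have e: "concat (map (\<lambda>k. replicate c (f k)) [0..<Suc a]) = ?xs @ replicate c (f a)" by simp
  have len: "length ?xs = a * c" using Suc by simp
  show ?case
  proof (intro conjI allI impI)
    show "length (concat (map (\<lambda>k. replicate c (f k)) [0..<Suc a])) = Suc a * c"
      unfolding e using len by simp
    fix i assume i: "i < Suc a * c"
    show "concat (map (\<lambda>k. replicate c (f k)) [0..<Suc a]) ! i = f (i div c)"
    proof (cases "i < a * c")
      case True then show ?thesis unfolding e using Suc len by (simp add: nth_append)
    next
      case False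
      then have "i div c = a" using i by (intro div_nat_eqI) (auto simp: mult.commute)
      moreover have "i - a * c < c" using i False by simp
      ultimately show ?thesis unfolding e using False len by (simp add: nth_append)
    qed
  qed
qed

lemma sum_take:
  fixes xs :: "real list"
  assumes "p \<le> length xs"
  shows "sum_list (take p xs) = (\<Sum>i<p. xs ! i)"
  using assms by (simp add: sum_list_sum_nth atLeast0LessThan min_def)

lemma decr_id:
  assumes "\<forall>i j. i \<le> j \<longrightarrow> j < length xs \<longrightarrow> xs ! j \<le> xs ! i"
  shows "decr xs = xs"
proof -
  have s: "sorted (rev xs)" unfolding sorted_iff_nth_mono_less using assms by (auto simp: rev_nth)
  have "sort xs = rev xs" by (rule properties_for_sort) (use s in auto)
  then show ?thesis unfolding decr_def by simp
qed

lemma sum_split_lt: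
  fixes f :: "nat \<Rightarrow> real"
  shows "(\<Sum>k<m + n. f k) = (\<Sum>k<m. f k) + (\<Sum>k=m..<m + n. f k)"
  unfolding lessThan_atLeast0 by (rule sum.atLeastLessThan_concat[symmetric]) auto

lemma sum_block:
  fixes h :: "nat \<Rightarrow> real"
  shows "(\<Sum>i<a * c. h (i div c)) = real c * (\<Sum>k<a. h k)"
proof (induction a)
  case 0 then show ?case by simp
next
  case (Suc a)
  have sc: "Suc a * c = a * c + c" by simp
  have "(\<Sum>i<Suc a * c. h (i div c)) = (\<Sum>i<a * c. h (i div c)) + (\<Sum>i=a*c..<a*c + c. h (i div c))"
    unfolding sc by (rule sum_split_lt)
  also have "(\<Sum>i=a*c..<a*c + c. h (i div c)) = (\<Sum>i=a*c..<a*c + c. h a)"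
  proof (rule sum.cong[OF refl])
    fix i assume "i \<in> {a*c..<a*c + c}"
    then have "i div c = a" by (intro div_nat_eqI) (auto simp: mult.commute)
    then show "h (i div c) = h a" by simp
  qed
  finally show ?case using Suc by (simp add: algebra_simps)
qed

lemma ds_major:
  fixes y x :: "nat \<Rightarrow> real" and D :: "nat \<Rightarrow> nat \<Rightarrow> real"
  assumes ys: "\<forall>i j. i \<le> j \<longrightarrow> j < N \<longrightarrow> y j \<le> y i"
    and ds: "doubly_stochastic N D"
    and x: "\<forall>i<N. x i = (\<Sum>j<N. D i j * y j)"
    and p: "p \<le> N"
  shows "(\<Sum>i<p. x i) \<le> (\<Sum>j<p. y j)" "(\<Sum>i<N. x i) = (\<Sum>j<N. y j)"
proof -
  have nn: "\<And>i j. i < N \<Longrightarrow> j < N \<Longrightarrow> D i j \<ge> 0" and rs: "\<And>i. i < N \<Longrightarrow> (\<Sum>j<N. D i j) = 1"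
    and cs: "\<And>j. j < N \<Longrightarrow> (\<Sum>i<N. D i j) = 1"
    using ds unfolding doubly_stochastic_def by auto
  have gen: "(\<Sum>i<q. x i) = (\<Sum>j<N. (\<Sum>i<q. D i j) * y j)" if "q \<le> N" for q
  proof -
    have "(\<Sum>i<q. x i) = (\<Sum>i<q. \<Sum>j<N. D i j * y j)" using x that by (intro sum.cong) auto
    also have "\<dots> = (\<Sum>j<N. (\<Sum>i<q. D i j) * y j)"
      by (subst sum.swap) (simp add: sum_distrib_right)
    finally show ?thesis .
  qed
  show "(\<Sum>i<N. x i) = (\<Sum>j<N. y j)" using gen[of N] cs by simp
  define c where "c j = (\<Sum>i<p. D i j)" for j
  have c01: "0 \<le> c j \<and> c j \<le> 1" if "j < N" for j
  proof -
    have "c j \<le> (\<Sum>i<N. D i j)" unfolding c_def using p nn that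
      by (intro sum_mono2) auto
    moreover have "0 \<le> c j" unfolding c_def using p nn that by (intro sum_nonneg) auto
    ultimately show ?thesis using cs that by simp
  qed
  have csum: "(\<Sum>j<N. c j) = real p"
  proof -
    have "(\<Sum>j<N. c j) = (\<Sum>i<p. \<Sum>j<N. D i j)" unfolding c_def by (rule sum.swap)
    also have "\<dots> = (\<Sum>i<p. 1)" using rs p by (intro sum.cong) auto
    finally show ?thesis by simp
  qed
  show "(\<Sum>i<p. x i) \<le> (\<Sum>j<p. y j)"
  proof (cases "p = N")
    case True
    then show ?thesis using \<open>(\<Sum>i<N. x i) = (\<Sum>j<N. y j)\<close> by simp
  next
    case False
    then have pN: "p < N" using p by simp
    define e where "e j = c j - (if j < p then 1 else 0)" for j
    have ifsum: "(\<Sum>j<N. (if j < p then 1 else 0) * f j) = (\<Sum>j<p. f j)" for f :: "nat \<Rightarrow> real"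
    proof -
      have "(\<Sum>j<N. (if j < p then 1 else 0) * f j) = (\<Sum>j<N. (if j \<in> {..<p} then f j else 0))"
        by (intro sum.cong) auto
      also have "\<dots> = (\<Sum>j\<in>{..<N} \<inter> {..<p}. f j)" by (rule sum.inter_restrict[symmetric]) simp
      also have "{..<N} \<inter> {..<p} = {..<p}" using pN by auto
      finally show ?thesis .
    qed
    have esum: "(\<Sum>j<N. e j) = 0"
    proof -
      have "(\<Sum>j<N. e j) = (\<Sum>j<N. c j) - (\<Sum>j<N. (if j < p then 1 else 0) * 1)"
        unfolding e_def by (simp add: sum_subtractf)
      also have "\<dots> = 0" unfolding ifsum csum by simp
      finally show ?thesis .
    qed
    have ysum: "(\<Sum>j<p. y j) = (\<Sum>j<N. (if j < p then 1 else 0) * y j)" using ifsum by simp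
    have "(\<Sum>i<p. x i) - (\<Sum>j<p. y j) = (\<Sum>j<N. e j * y j)"
    proof -
      have "(\<Sum>j<N. e j * y j) = (\<Sum>j<N. c j * y j - (if j < p then 1 else 0) * y j)"
        unfolding e_def by (intro sum.cong) (auto simp: algebra_simps)
      also have "\<dots> = (\<Sum>j<N. c j * y j) - (\<Sum>j<N. (if j < p then 1 else 0) * y j)"
        by (rule sum_subtractf)
      finally show ?thesis unfolding gen[OF p] ysum c_def by simp
    qed
    also have "\<dots> = (\<Sum>j<N. e j * (y j - y p) + e j * y p)"
      by (intro sum.cong) (auto simp: algebra_simps)
    also have "\<dots> = (\<Sum>j<N. e j * (y j - y p)) + y p * (\<Sum>j<N. e j)"
      by (simp add: sum.distrib sum_distrib_left mult.commute)
    also have "\<dots> \<le> 0"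
    proof -
      have "(\<Sum>j<N. e j * (y j - y p)) \<le> 0"
      proof (rule sum_nonpos)
        fix j assume j: "j \<in> {..<N}"
        show "e j * (y j - y p) \<le> 0"
        proof (cases "j < p")
          case True
          then have "e j \<le> 0" "y p \<le> y j" unfolding e_def using c01 j ys pN by auto
          then show ?thesis by (simp add: mult_nonpos_nonneg)
        next
          case False
          then have "e j \<ge> 0" "y j \<le> y p" unfolding e_def using c01 j ys pN by auto
          then show ?thesis by (simp add: mult_nonneg_nonpos)
        qed
      qed
      then show ?thesis using esum by simp
    qed
    finally show ?thesis by simp
  qed
qed

lemma block_partial:
  fixes d :: "nat \<Rightarrow> real"
  assumes c: "c > 0" and pd: "\<forall>a \<le> A. (\<Sum>k<a. d k) \<ge> 0" and p: "p \<le> A * c"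
  shows "(\<Sum>i<p. d (i div c)) \<ge> 0"
proof -
  define a where "a = p div c"
  define b where "b = p mod c"
  have pe: "p = a * c + b" unfolding a_def b_def by simp
  have bc: "b < c" unfolding b_def using c by simp
  have "(\<Sum>i<p. d (i div c)) = (\<Sum>i<a * c. d (i div c)) + (\<Sum>i=a*c..<a*c + b. d (i div c))"
    unfolding pe by (rule sum_split_lt)
  also have "(\<Sum>i=a*c..<a*c + b. d (i div c)) = (\<Sum>i=a*c..<a*c + b. d a)"
  proof (rule sum.cong[OF refl])
    fix i assume "i \<in> {a*c..<a*c + b}"
    then have "i div c = a" using bc by (intro div_nat_eqI) (auto simp: mult.commute)
    then show "d (i div c) = d a" by simp
  qed
  finally have eq: "(\<Sum>i<p. d (i div c)) = real c * (\<Sum>k<a. d k) + real b * d a"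
    by (simp add: sum_block)
  show ?thesis
  proof (cases "b = 0")
    case True
    then have "a \<le> A" using p pe c by (metis add_0_right mult_le_cancel2 not_gr0)
    then show ?thesis using eq True pd by simp
  next
    case False
    then have "a * c < A * c" using p pe by linarith
    then have aA: "Suc a \<le> A" by (simp add: mult_less_cancel2)
    show ?thesis
    proof (cases "d a \<ge> 0")
      case True
      then show ?thesis using eq pd aA by simp
    next
      case False
      then have "real b * d a \<ge> real c * d a" using bc by (intro mult_right_mono_neg) auto
      moreover have "real c * (\<Sum>k<Suc a. d k) \<ge> 0" using pd aA by (intro mult_nonneg_nonneg) auto
      ultimately show ?thesis using eq by (simp add: algebra_simps)
    qed
  qed
qed




lemma nu_aux:
  fixes a n L T :: real
  assumes "1 \<le> a" "a \<le> n - 1" "T \<le> a * L"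
  shows "(n - 1)/n * T + a * L / n \<le> a / (a + 1) * (L + T)"
proof -
  have n: "n > 0" using assms by simp
  have "a / (a + 1) * (L + T) - ((n - 1)/n * T + a * L / n) = (n - 1 - a) * (a * L - T) / (n * (a + 1))"
    using n assms(1) by (simp add: field_simps)
  moreover have "(n - 1 - a) * (a * L - T) / (n * (a + 1)) \<ge> 0"
    using assms n by (intro divide_nonneg_pos mult_nonneg_nonneg) auto
  ultimately show ?thesis by linarith
qed

theorem theorem2p6:
  fixes n :: nat and lam mu :: "nat \<Rightarrow> real"
  assumes n2: "n \<ge> 2"
    and lam_sorted: "\<forall>i j. i \<le> j \<longrightarrow> j < n \<longrightarrow> lam j \<le> lam i"
    and mu_sorted: "\<forall>i j. i \<le> j \<longrightarrow> j < n - 1 \<longrightarrow> mu j \<le> mu i"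
    and mu_crit: "\<forall>x. order x (pderiv (\<Prod>j<n. [:- lam j, 1:]))
                      = card {k. k < n - 1 \<and> mu k = x}"
  shows "let N = n * (n - 1);
             lamS = concat (map (\<lambda>j. replicate (n - 1) (lam j)) [0..<n]);
             muS = concat (map (\<lambda>k. replicate n (mu k)) [0..<n - 1]);
             nuS = concat (map (\<lambda>j. replicate n
                      ((real n - 1) / real n * lam (j + 1) + lam 0 / real n)) [0..<n - 1])
         in majorizes muS nuS \<and> majorizes lamS muS \<and>
            (\<exists>D. doubly_stochastic N D \<and>
                 (\<forall>i<N. muS ! i = (\<Sum>j<N. D i j * lamS ! j)))"
proof -
  obtain S where Snn: "\<forall>i<n-1. \<forall>j<n. S i j \<ge> 0" and Srow: "\<forall>i<n-1. (\<Sum>j<n. S i j) = 1"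
    and Scol: "\<forall>j<n. (\<Sum>i<n-1. S i j) = (real n - 1)/real n"
    and Smu: "\<forall>i<n-1. mu i = (\<Sum>j<n. S i j * lam j)"
    and Sineq: "\<forall>k. 1 \<le> k \<longrightarrow> k \<le> n - 1 \<longrightarrow> (\<Sum>i<k. mu i) \<ge> real k / (real k + 1) * (\<Sum>j<Suc k. lam j)"
    using limit_main[OF assms] by blast
  define N where "N = n * (n - 1)"
  define lamS where "lamS = concat (map (\<lambda>j. replicate (n - 1) (lam j)) [0..<n])"
  define muS where "muS = concat (map (\<lambda>k. replicate n (mu k)) [0..<n - 1])"
  define nu where "nu j = (real n - 1) / real n * lam (j + 1) + lam 0 / real n" for j
  define nuS where "nuS = concat (map (\<lambda>j. replicate n (nu j)) [0..<n - 1])"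
  have nuS_eq: "nuS = concat (map (\<lambda>j. replicate n
                      ((real n - 1) / real n * lam (j + 1) + lam 0 / real n)) [0..<n - 1])"
    unfolding nuS_def nu_def ..
  have NN: "(n - 1) * n = N" unfolding N_def by simp
  have Ll: "length lamS = N" "\<forall>j<N. lamS ! j = lam (j div (n-1))"
    using block_list[of "n-1" lam n] unfolding lamS_def N_def by auto
  have Lm: "length muS = N" "\<forall>i<N. muS ! i = mu (i div n)"
    using block_list[of n mu "n-1"] unfolding muS_def NN by auto
  have Ln: "length nuS = N" "\<forall>i<N. nuS ! i = nu (i div n)"
    using block_list[of n nu "n-1"] unfolding nuS_def NN by auto
  have dn: "i < N \<Longrightarrow> i div n < n - 1" for i
    unfolding NN[symmetric] by (simp add: less_mult_imp_div_less)
  have dn1: "j < N \<Longrightarrow> j div (n-1) < n" for j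
    unfolding N_def by (simp add: less_mult_imp_div_less)
  have lamS_s: "\<forall>i j. i \<le> j \<longrightarrow> j < N \<longrightarrow> lamS ! j \<le> lamS ! i"
  proof (intro allI impI)
    fix i j assume ij: "i \<le> j" "j < N"
    then show "lamS ! j \<le> lamS ! i" using Ll dn1[of j] lam_sorted div_le_mono[OF ij(1), of "n-1"] by auto
  qed
  have muS_s: "\<forall>i j. i \<le> j \<longrightarrow> j < N \<longrightarrow> muS ! j \<le> muS ! i"
  proof (intro allI impI)
    fix i j assume ij: "i \<le> j" "j < N"
    then show "muS ! j \<le> muS ! i" using Lm dn[of j] mu_sorted div_le_mono[OF ij(1), of n] by auto
  qed
  have nuS_s: "\<forall>i j. i \<le> j \<longrightarrow> j < N \<longrightarrow> nuS ! j \<le> nuS ! i"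
  proof (intro allI impI)
    fix i j assume ij: "i \<le> j" "j < N"
    have "lam (j div n + 1) \<le> lam (i div n + 1)" using dn[of j] lam_sorted div_le_mono[OF ij(1), of n] ij by auto
    moreover have "(real n - 1) / real n \<ge> 0" using n2 by simp
    ultimately have "(real n - 1) / real n * lam (j div n + 1) \<le> (real n - 1) / real n * lam (i div n + 1)"
      by (rule mult_left_mono)
    then have "nu (j div n) \<le> nu (i div n)" unfolding nu_def by linarith
    then show "nuS ! j \<le> nuS ! i" using Ln ij by auto
  qed
  have dl: "decr lamS = lamS" using decr_id lamS_s Ll by metis
  have dm: "decr muS = muS" using decr_id muS_s Lm by metis
  have dnu: "decr nuS = nuS" using decr_id nuS_s Ln by metis
  define D where "D i j = S (i div n) (j div (n-1)) / (real n - 1)" for i j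
  have n1: "real n - 1 > 0" using n2 by simp
  have ds: "doubly_stochastic N D"
    unfolding doubly_stochastic_def
  proof (intro conjI allI impI)
    fix i j assume i: "i < N" and j: "j < N"
    show "0 \<le> D i j" unfolding D_def using Snn dn[OF i] dn1[OF j] n1 by simp
  next
    fix i assume i: "i < N"
    have "(\<Sum>j<N. D i j) = real (n-1) * (\<Sum>l<n. S (i div n) l / (real n - 1))"
      unfolding D_def N_def by (rule sum_block)
    also have "\<dots> = (\<Sum>l<n. S (i div n) l)" using n1 n2 by (simp add: sum_divide_distrib[symmetric] of_nat_diff)
    finally show "(\<Sum>j<N. D i j) = 1" using Srow dn[OF i] by simp
  next
    fix j assume j: "j < N"
    have "(\<Sum>i<N. D i j) = real n * (\<Sum>k<n-1. S k (j div (n-1)) / (real n - 1))"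
      unfolding D_def NN[symmetric] by (rule sum_block)
    also have "\<dots> = real n * ((real n - 1) / real n) / (real n - 1)"
      using Scol dn1[OF j] by (simp add: sum_divide_distrib[symmetric])
    finally show "(\<Sum>i<N. D i j) = 1" using n1 n2 by simp
  qed
  have muD: "\<forall>i<N. muS ! i = (\<Sum>j<N. D i j * lamS ! j)"
  proof (intro allI impI)
    fix i assume i: "i < N"
    have "(\<Sum>j<N. D i j * lamS ! j) = (\<Sum>j<N. S (i div n) (j div (n-1)) / (real n - 1) * lam (j div (n-1)))"
      unfolding D_def using Ll by (intro sum.cong) auto
    also have "\<dots> = real (n-1) * (\<Sum>l<n. S (i div n) l / (real n - 1) * lam l)"
      unfolding N_def by (rule sum_block)
    also have "\<dots> = (\<Sum>l<n. S (i div n) l * lam l)"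
      using n1 n2 by (simp add: sum_distrib_left of_nat_diff)
    also have "\<dots> = mu (i div n)" using Smu dn[OF i] by simp
    finally show "muS ! i = (\<Sum>j<N. D i j * lamS ! j)" using Lm i by simp
  qed
  have maj2: "majorizes lamS muS"
    unfolding majorizes_def dl dm Ll Lm
  proof (intro conjI ballI)
    show "N = N" ..
    fix k assume "k \<in> {1..N}"
    then have k: "k \<le> N" by simp
    have "(\<Sum>i<k. muS ! i) \<le> (\<Sum>j<k. lamS ! j)"
      using ds_major(1)[OF lamS_s ds muD k] .
    then show "sum_list (take k muS) \<le> sum_list (take k lamS)"
      using k Ll Lm by (simp add: sum_take)
  next
    have "(\<Sum>i<N. muS ! i) = (\<Sum>j<N. lamS ! j)"
      using ds_major(2)[OF lamS_s ds muD le_refl] .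
    moreover have "sum_list (take N lamS) = (\<Sum>j<N. lamS ! j)" by (rule sum_take) (simp add: Ll)
    moreover have "sum_list (take N muS) = (\<Sum>j<N. muS ! j)" by (rule sum_take) (simp add: Lm)
    ultimately show "sum_list (take N lamS) = sum_list (take N muS)" by simp
  qed
  define d where "d k = mu k - nu k" for k
  have pd: "\<forall>a \<le> n - 1. (\<Sum>k<a. d k) \<ge> 0"
  proof (intro allI impI)
    fix a assume a: "a \<le> n - 1"
    show "(\<Sum>k<a. d k) \<ge> 0"
    proof (cases "a = 0")
      case True then show ?thesis by simp
    next
      case False
      define T where "T = (\<Sum>k<a. lam (Suc k))"
      have T: "T \<le> real a * lam 0"
      proof -
        have "T \<le> (\<Sum>k<a. lam 0)" unfolding T_def using lam_sorted a by (intro sum_mono) auto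
        then show ?thesis by simp
      qed
      have "(\<Sum>k<a. nu k) = (real n - 1)/real n * T + real a * lam 0 / real n"
        unfolding nu_def T_def by (simp add: sum.distrib sum_distrib_left)
      also have "\<dots> \<le> real a / (real a + 1) * (lam 0 + T)"
        using nu_aux[of "real a" "real n" T "lam 0"] False a T n2 by (simp add: of_nat_diff)
      also have "\<dots> = real a / (real a + 1) * (\<Sum>j<Suc a. lam j)"
        unfolding T_def by (simp only: sum.lessThan_Suc_shift)
      also have "\<dots> \<le> (\<Sum>k<a. mu k)" using Sineq False a by simp
      finally show ?thesis unfolding d_def by (simp add: sum_subtractf)
    qed
  qed
  have maj1: "majorizes muS nuS"
    unfolding majorizes_def dm dnu Lm Ln
  proof (intro conjI ballI)
    show "N = N" ..
    fix k assume "k \<in> {1..N}"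
    then have k: "k \<le> N" by simp
    have "(\<Sum>i<k. d (i div n)) \<ge> 0"
      using block_partial[of n "n-1" d k] pd k n2 NN by simp
    moreover have "(\<Sum>i<k. d (i div n)) = (\<Sum>i<k. muS ! i) - (\<Sum>i<k. nuS ! i)"
      unfolding sum_subtractf[symmetric] d_def using Lm Ln k by (intro sum.cong) auto
    ultimately show "sum_list (take k nuS) \<le> sum_list (take k muS)"
      using k Ln Lm by (simp add: sum_take)
  next
    have sm: "(\<Sum>k<n-1. mu k) = (real n - 1)/real n * (\<Sum>j<n. lam j)"
    proof -
      have "(\<Sum>k<n-1. mu k) = (\<Sum>k<n-1. \<Sum>j<n. S k j * lam j)" using Smu by simp
      also have "\<dots> = (\<Sum>j<n. (\<Sum>k<n-1. S k j) * lam j)"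
        by (subst sum.swap) (simp add: sum_distrib_right)
      also have "\<dots> = (\<Sum>j<n. (real n - 1)/real n * lam j)" using Scol by simp
      finally show ?thesis by (simp add: sum_distrib_left)
    qed
    have sn: "(\<Sum>k<n-1. nu k) = (real n - 1)/real n * (\<Sum>j<n. lam j)"
    proof -
      have nn: "n = Suc (n-1)" using n2 by simp
      have "(\<Sum>j<n. lam j) = lam 0 + (\<Sum>k<n-1. lam (Suc k))"
        by (subst nn) (simp only: sum.lessThan_Suc_shift)
      moreover have "(\<Sum>k<n-1. nu k) = (real n - 1)/real n * (\<Sum>k<n-1. lam (Suc k)) + real (n-1) * lam 0 / real n"
        unfolding nu_def by (simp add: sum.distrib sum_distrib_left)
      moreover have "real (n-1) = real n - 1" using n2 by (simp add: of_nat_diff)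
      moreover have "\<And>m A L::real. m \<noteq> 0 \<Longrightarrow> (m-1)/m*A + (m-1)*L/m = (m-1)/m*(L + A)"
        by (simp add: field_simps)
      moreover have "real n \<noteq> 0" using n2 by simp
      ultimately show ?thesis by metis
    qed
    have "(\<Sum>i<N. muS ! i) = (\<Sum>i<N. mu (i div n))" using Lm by simp
    also have "\<dots> = real n * (\<Sum>k<n-1. mu k)" unfolding NN[symmetric] by (rule sum_block)
    also have "\<dots> = real n * (\<Sum>k<n-1. nu k)" using sm sn by simp
    also have "\<dots> = (\<Sum>i<N. nu (i div n))" unfolding NN[symmetric] by (rule sum_block[symmetric])
    also have "\<dots> = (\<Sum>i<N. nuS ! i)" using Ln by simp
    finally have "(\<Sum>i<N. muS ! i) = (\<Sum>i<N. nuS ! i)" .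
    moreover have "sum_list (take N nuS) = (\<Sum>j<N. nuS ! j)" by (rule sum_take) (simp add: Ln)
    moreover have "sum_list (take N muS) = (\<Sum>j<N. muS ! j)" by (rule sum_take) (simp add: Lm)
    ultimately show "sum_list (take N muS) = sum_list (take N nuS)" by simp
  qed
  show ?thesis
    unfolding Let_def nuS_eq[symmetric] lamS_def[symmetric] muS_def[symmetric] N_def[symmetric]
    using maj1 maj2 ds muD by blast
qed


end
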